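(* Let $n=2m+1$ be odd with $n\ge5$, and work in the polynomial ring $\mathbb Z_2[R,V_1,\dots,V_{n-1}]$ (no relations imposed). Let $D_n=\binom{n-1}{m+1}=\binom{n-1}{m-1}$, and enumerate the $(m+1)$-element subsets of $\{1,\dots,n-1\}$ as $L_1,\dots,L_{D_n}$. For each $i$ set $$p_i=\sum_{S\subset L_i,\ |S|=m-1}R\prod_{j\in S}V_j,\qquad f_i=\sum_{S\subset L_i,\ |S|\le m-2}R^{|L_i|-|S|-1}\prod_{j\in S}V_j$$ (the second sum including $S=\emptyset$). Let $$X_{m+1}=\Big\{\xi=(\xi_1,\dots,\xi_{D_n})\in(\mathbb Z_2)^{D_n}:\ \sum_{i=1}^{D_n}\xi_ip_i=0\Big\}.$$ Then (i) $\dim_{\mathbb Z_2}X_{m+1}=\beta_n$, where $\beta_n=D_n-\alpha_n$ and $\alpha_n=\sum_{i=0}^{m-1}2^{m-1-i}\binom{2i}{i}$; and (ii) for any basis $\Omega_{m+1}$ of $X_{m+1}$, the polynomials $F_\xi=\sum_{i=1}^{D_n}\xi_if_i$, $\xi\in\Omega_{m+1}$, are linearly independent over $\mathbb Z_2$.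
   Context: $\mathbb Z_2=\mathbb Z/2\mathbb Z$. Note $p_i+f_i=\sum_{S\subset L_i,\,|S|\le m-1}R^{|L_i-S|-1}\prod_{j\in S}V_j$. *)

theory Defs
  imports Main "HOL-Library.Z2" "HOL-Library.Poly_Mapping" "HOL-Library.Function_Algebras"
begin

(* Polynomial ring Z_2[R, V_1, ..., V_{n-1}]:  (nat \<Rightarrow>\<^sub>0 nat) \<Rightarrow>\<^sub>0 bit,
   variable 0 is R, variable j (1 \<le> j \<le> n-1) is V_j. *)
type_synonym z2poly = "(nat \<Rightarrow>\<^sub>0 nat) \<Rightarrow>\<^sub>0 bit"

definition mono :: "nat \<Rightarrow> nat set \<Rightarrow> z2poly" where
  "mono k S = Poly_Mapping.single
      (Poly_Mapping.single 0 k + (\<Sum>j\<in>S. Poly_Mapping.single j 1)) (1::bit)"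

definition pscale :: "bit \<Rightarrow> z2poly \<Rightarrow> z2poly" where
  "pscale c P = Poly_Mapping.single 0 c * P"

(* the (m+1)-element subsets L of {1..n-1}, n = 2m+1 *)
definition Lsets :: "nat \<Rightarrow> nat set set" where
  "Lsets m = {L. L \<subseteq> {1..2*m} \<and> card L = m + 1}"

definition pp :: "nat \<Rightarrow> nat set \<Rightarrow> z2poly" where
  "pp m L = (\<Sum>S\<in>{S. S \<subseteq> L \<and> card S = m - 1}. mono 1 S)"

definition ff :: "nat \<Rightarrow> nat set \<Rightarrow> z2poly" where
  "ff m L = (\<Sum>S\<in>{S. S \<subseteq> L \<and> card S \<le> m - 2}. mono (card L - card S - 1) S)"

(* vectors xi in Z_2^{D_n}, indexed by the sets L in Lsets m *)
definition Xspace :: "nat \<Rightarrow> (nat set \<Rightarrow> bit) set" where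
  "Xspace m = {xi. (\<forall>L. L \<notin> Lsets m \<longrightarrow> xi L = 0)
                  \<and> (\<Sum>L\<in>Lsets m. pscale (xi L) (pp m L)) = 0}"

definition Fxi :: "nat \<Rightarrow> (nat set \<Rightarrow> bit) \<Rightarrow> z2poly" where
  "Fxi m xi = (\<Sum>L\<in>Lsets m. pscale (xi L) (ff m L))"

definition vscale :: "bit \<Rightarrow> (nat set \<Rightarrow> bit) \<Rightarrow> (nat set \<Rightarrow> bit)" where
  "vscale c xi = (\<lambda>L. c * xi L)"

definition z2_indep_family :: "(bit \<Rightarrow> 'v \<Rightarrow> 'v::comm_monoid_add) \<Rightarrow> ('i \<Rightarrow> 'v) \<Rightarrow> 'i set \<Rightarrow> bool" where
  "z2_indep_family sc v I \<longleftrightarrow> finite I \<and>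
     (\<forall>c. (\<Sum>i\<in>I. sc (c i) (v i)) = 0 \<longrightarrow> (\<forall>i\<in>I. c i = 0))"

definition z2_span :: "(bit \<Rightarrow> 'v \<Rightarrow> 'v::comm_monoid_add) \<Rightarrow> 'v set \<Rightarrow> 'v set" where
  "z2_span sc B = {(\<Sum>b\<in>B. sc (c b) b) | c. True}"

definition z2_basis :: "(bit \<Rightarrow> 'v \<Rightarrow> 'v::comm_monoid_add) \<Rightarrow> 'v set \<Rightarrow> 'v set \<Rightarrow> bool" where
  "z2_basis sc X B \<longleftrightarrow> B \<subseteq> X \<and> z2_indep_family sc id B \<and> z2_span sc B = X"

definition alpha :: "nat \<Rightarrow> nat" where
  "alpha m = (\<Sum>i<m. 2 ^ (m - 1 - i) * ((2 * i) choose i))"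

end

theory Submission imports Defs begin
declare add_bit_eq_xor[simp del] mult_bit_eq_and[simp del]

definition ksub :: "nat set \<Rightarrow> nat \<Rightarrow> nat set set" where
  "ksub U k = {L. L \<subseteq> U \<and> card L = k}"

definition up :: "nat set \<Rightarrow> nat \<Rightarrow> (nat set \<Rightarrow> bit) \<Rightarrow> nat set \<Rightarrow> bit" where
  "up U k g S = (\<Sum>L\<in>ksub U k. if S \<subseteq> L then g L else 0)"

definition Fn :: "'a set \<Rightarrow> ('a \<Rightarrow> bit) set" where
  "Fn A = {f. \<forall>x. x \<notin> A \<longrightarrow> f x = 0}"

definition KK :: "nat set \<Rightarrow> nat \<Rightarrow> nat \<Rightarrow> (nat set \<Rightarrow> bit) set" where
  "KK U k t = {x \<in> Fn (ksub U k). \<forall>S\<in>ksub U t. up U k x S = 0}"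

definition msk :: "nat set set \<Rightarrow> (nat set \<Rightarrow> bit) \<Rightarrow> nat set \<Rightarrow> bit" where
  "msk A g = (\<lambda>L. if L \<in> A then g L else 0)"

lemma bit_add_self[simp]: "(x::bit) + x = 0" by (cases x) simp_all

lemma finite_ksub[simp]: "finite U \<Longrightarrow> finite (ksub U k)"
  unfolding ksub_def by simp

lemma card_ksub: "finite U \<Longrightarrow> card (ksub U k) = card U choose k"
  unfolding ksub_def by (rule n_subsets)

lemma up_cong: "(\<And>L. L \<subseteq> U \<Longrightarrow> g L = h L) \<Longrightarrow> up U k g S = up U k h S"
  unfolding up_def ksub_def by (rule sum.cong) auto

lemma up_msk[simp]: "up U k (msk (ksub U k) g) = up U k g"
  unfolding up_def msk_def by (intro ext sum.cong) auto

lemma up_not_sub: "\<not> S \<subseteq> U \<Longrightarrow> up U k g S = 0"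
  unfolding up_def ksub_def by (rule sum.neutral) auto

lemma up_self:
  assumes "finite U" "S \<in> ksub U k" shows "up U k g S = g S"
proof -
  have "up U k g S = (\<Sum>L\<in>ksub U k. if L = S then g L else 0)"
    unfolding up_def
  proof (rule sum.cong)
    fix L assume L: "L \<in> ksub U k"
    have "S \<subseteq> L \<longleftrightarrow> L = S"
    proof
      assume "S \<subseteq> L" thus "L = S" using L assms
        by (metis (mono_tags, lifting) card_subset_eq finite_subset ksub_def mem_Collect_eq)
    qed auto
    thus "(if S \<subseteq> L then g L else 0) = (if L = S then g L else 0)" by simp
  qed simp
  also have "\<dots> = g S" using assms by (simp add: sum.delta')
  finally show ?thesis .
qed

lemma up_add: "up U k (\<lambda>L. g L + h L) S = up U k g S + up U k h S"
  unfolding up_def sum.distrib[symmetric] by (rule sum.cong) auto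

lemma ksub_insert:
  assumes "finite U" "a \<notin> U" "j \<ge> 1"
  shows "ksub (insert a U) j = ksub U j \<union> insert a ` ksub U (j - 1)"
proof (rule set_eqI)
  fix L show "L \<in> ksub (insert a U) j \<longleftrightarrow> L \<in> ksub U j \<union> insert a ` ksub U (j - 1)"
  proof
    assume L: "L \<in> ksub (insert a U) j"
    show "L \<in> ksub U j \<union> insert a ` ksub U (j - 1)"
    proof (cases "a \<in> L")
      case True
      have LU: "L \<subseteq> insert a U" "card L = j" using L by (auto simp: ksub_def)
      have "finite L" using LU assms(1) finite_subset by blast
      hence "card (L - {a}) = j - 1" using LU True by (simp add: card_Diff_singleton)
      moreover have "L - {a} \<subseteq> U" using LU by blast
      ultimately have "L - {a} \<in> ksub U (j - 1)" by (simp add: ksub_def)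
      moreover have "L = insert a (L - {a})" using True by auto
      ultimately show ?thesis by blast
    next
      case False thus ?thesis using L by (auto simp: ksub_def)
    qed
  next
    assume "L \<in> ksub U j \<union> insert a ` ksub U (j - 1)"
    then show "L \<in> ksub (insert a U) j"
    proof
      assume "L \<in> ksub U j" thus ?thesis by (auto simp: ksub_def)
    next
      assume "L \<in> insert a ` ksub U (j - 1)"
      then obtain L' where L': "L' \<in> ksub U (j - 1)" "L = insert a L'" by auto
      have "finite L'" "a \<notin> L'" using L' assms by (auto simp: ksub_def intro: finite_subset)
      thus ?thesis using L' assms by (auto simp: ksub_def)
    qed
  qed
qed

lemma up_split:
  assumes "finite U" "a \<notin> U" "j \<ge> 1"
  shows "up (insert a U) j g S = up U j g S + up U (j - 1) (\<lambda>L. g (insert a L)) (S - {a})"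
proof -
  have disj: "ksub U j \<inter> insert a ` ksub U (j - 1) = {}" using assms by (auto simp: ksub_def)
  have inj: "inj_on (insert a) (ksub U (j - 1))"
  proof (rule inj_onI)
    fix x y assume "x \<in> ksub U (j - 1)" "y \<in> ksub U (j - 1)" "insert a x = insert a y"
    moreover have "a \<notin> x" "a \<notin> y" using calculation assms by (auto simp: ksub_def)
    ultimately show "x = y" by (metis Diff_insert_absorb)
  qed
  have "up (insert a U) j g S = up U j g S + (\<Sum>L\<in>insert a ` ksub U (j - 1). if S \<subseteq> L then g L else 0)"
    unfolding up_def ksub_insert[OF assms] using assms disj
    by (subst sum.union_disjoint) auto
  also have "(\<Sum>L\<in>insert a ` ksub U (j - 1). if S \<subseteq> L then g L else 0)
     = (\<Sum>L\<in>ksub U (j - 1). if S \<subseteq> insert a L then g (insert a L) else 0)"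
    using inj by (simp add: sum.reindex)
  also have "\<dots> = up U (j - 1) (\<lambda>L. g (insert a L)) (S - {a})"
    unfolding up_def by (intro sum.cong) auto
  finally show ?thesis .
qed

lemma up_split2:
  assumes "finite U" "a \<noteq> b" "a \<notin> U" "b \<notin> U" "j \<ge> 2"
  shows "up (insert a (insert b U)) j g S = up U j g S + up U (j - 1) (\<lambda>L. g (insert b L)) (S - {b})
     + up U (j - 1) (\<lambda>L. g (insert a L)) (S - {a}) + up U (j - 2) (\<lambda>L. g (insert a (insert b L))) (S - {a} - {b})"
proof -
  have "up (insert a (insert b U)) j g S = up (insert b U) j g S + up (insert b U) (j - 1) (\<lambda>L. g (insert a L)) (S - {a})"
    using assms by (intro up_split) auto
  also have "up (insert b U) j g S = up U j g S + up U (j - 1) (\<lambda>L. g (insert b L)) (S - {b})"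
    using assms by (intro up_split) auto
  also have "up (insert b U) (j - 1) (\<lambda>L. g (insert a L)) (S - {a}) =
     up U (j - 1) (\<lambda>L. g (insert a L)) (S - {a}) + up U (j - 1 - 1) (\<lambda>L. g (insert a (insert b L))) (S - {a} - {b})"
    using assms by (intro up_split) auto
  moreover have "j - 1 - 1 = j - 2" by simp
  ultimately show ?thesis by (simp only: add.assoc)
qed

lemma card_between:
  assumes "finite L" "S \<subseteq> L" "card L = j" "card S = s" "s \<le> i"
  shows "card {T. S \<subseteq> T \<and> T \<subseteq> L \<and> card T = i} = (j - s) choose (i - s)"
proof -
  have fS: "finite S" using assms finite_subset by blast
  have "bij_betw (\<lambda>T. T - S) {T. S \<subseteq> T \<and> T \<subseteq> L \<and> card T = i} {R. R \<subseteq> L - S \<and> card R = i - s}"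
  proof (rule bij_betw_byWitness[where f' = "\<lambda>R. R \<union> S"])
    show "\<forall>a\<in>{T. S \<subseteq> T \<and> T \<subseteq> L \<and> card T = i}. a - S \<union> S = a" by auto
    show "\<forall>a'\<in>{R. R \<subseteq> L - S \<and> card R = i - s}. a' \<union> S - S = a'" by auto
    show "(\<lambda>T. T - S) ` {T. S \<subseteq> T \<and> T \<subseteq> L \<and> card T = i} \<subseteq> {R. R \<subseteq> L - S \<and> card R = i - s}"
      using assms fS by (auto simp: card_Diff_subset)
    show "(\<lambda>R. R \<union> S) ` {R. R \<subseteq> L - S \<and> card R = i - s} \<subseteq> {T. S \<subseteq> T \<and> T \<subseteq> L \<and> card T = i}"
    proof clarify
      fix R assume R: "R \<subseteq> L - S" "card R = i - s"
      have "finite R" using R assms finite_subset by blast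
      hence "card (R \<union> S) = card R + card S" using R fS by (subst card_Un_disjoint) auto
      thus "S \<subseteq> R \<union> S \<and> R \<union> S \<subseteq> L \<and> card (R \<union> S) = i" using R assms by auto
    qed
  qed
  hence "card {T. S \<subseteq> T \<and> T \<subseteq> L \<and> card T = i} = card {R. R \<subseteq> L - S \<and> card R = i - s}"
    by (rule bij_betw_same_card)
  also have "\<dots> = card (L - S) choose (i - s)" using assms by (intro n_subsets) auto
  also have "card (L - S) = j - s" using assms fS by (simp add: card_Diff_subset)
  finally show ?thesis .
qed

lemma up_compose:
  assumes "finite U" "card S = s" "s \<le> i"
  shows "up U i (up U j g) S = of_nat ((j - s) choose (i - s)) * up U j g S"
proof -
  have "up U i (up U j g) S = (\<Sum>T\<in>ksub U i. \<Sum>L\<in>ksub U j. if S \<subseteq> T \<and> T \<subseteq> L then g L else 0)"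
    unfolding up_def by (intro sum.cong) auto
  also have "\<dots> = (\<Sum>L\<in>ksub U j. \<Sum>T\<in>ksub U i. if S \<subseteq> T \<and> T \<subseteq> L then g L else 0)"
    by (rule sum.swap)
  also have "\<dots> = (\<Sum>L\<in>ksub U j. of_nat ((j - s) choose (i - s)) * (if S \<subseteq> L then g L else 0))"
  proof (rule sum.cong)
    fix L assume L: "L \<in> ksub U j"
    have fL: "finite L" using L assms(1) by (auto simp: ksub_def intro: finite_subset)
    have "(\<Sum>T\<in>ksub U i. if S \<subseteq> T \<and> T \<subseteq> L then g L else 0)
        = (\<Sum>T\<in>{T\<in>ksub U i. S \<subseteq> T \<and> T \<subseteq> L}. g L)"
      by (rule sum.inter_filter[symmetric]) (use assms in simp)
    also have "\<dots> = of_nat (card {T\<in>ksub U i. S \<subseteq> T \<and> T \<subseteq> L}) * g L"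
      by simp
    also have "{T\<in>ksub U i. S \<subseteq> T \<and> T \<subseteq> L} = {T. S \<subseteq> T \<and> T \<subseteq> L \<and> card T = i}"
      using L by (auto simp: ksub_def)
    finally have eq: "(\<Sum>T\<in>ksub U i. if S \<subseteq> T \<and> T \<subseteq> L then g L else 0)
         = of_nat (card {T. S \<subseteq> T \<and> T \<subseteq> L \<and> card T = i}) * g L" .
    show "(\<Sum>T\<in>ksub U i. if S \<subseteq> T \<and> T \<subseteq> L then g L else 0)
        = of_nat ((j - s) choose (i - s)) * (if S \<subseteq> L then g L else 0)"
    proof (cases "S \<subseteq> L")
      case True
      thus ?thesis using eq card_between[OF fL True _ assms(2,3), of j] L by (simp add: ksub_def)
    next
      case False
      hence E: "{T. S \<subseteq> T \<and> T \<subseteq> L \<and> card T = i} = {}" by auto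
      have "(\<Sum>T\<in>ksub U i. if S \<subseteq> T \<and> T \<subseteq> L then g L else 0) = of_nat (card ({}::nat set set)) * g L"
        unfolding eq E by (rule refl)
      hence "(\<Sum>T\<in>ksub U i. if S \<subseteq> T \<and> T \<subseteq> L then g L else 0) = 0" by simp
      thus ?thesis using False by simp
    qed
  qed simp
  also have "\<dots> = of_nat ((j - s) choose (i - s)) * up U j g S"
    unfolding up_def by (simp add: sum_distrib_left)
  finally show ?thesis .
qed

lemma bit_cases3: "(a::bit) + b + c + (a + c + b) = 0"
  by (metis add.commute add.left_commute bit_add_self)

lemma bit_cancel: "(a::bit) + c = b + c \<Longrightarrow> a = b"
  by simp

lemma bit_solve: "(a::bit) + b + c + d = 0 \<Longrightarrow> d = a + b + c"
  by (metis add.assoc add.right_neutral bit_add_self)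

lemma up_cong2: "(\<And>L. L \<in> ksub U k \<Longrightarrow> g L = h L) \<Longrightarrow> up U k g S = up U k h S"
  unfolding up_def by (rule sum.cong) auto

lemma up_zero: "up U k (\<lambda>L. 0) S = 0"
  unfolding up_def by simp

lemma Fn_Pow:
  assumes "finite A" shows "finite (Fn A)" "card (Fn A) = 2 ^ card A"
proof -
  have bij: "bij_betw (\<lambda>f. {x. f x = 1}) (Fn A) (Pow A)"
  proof (rule bij_betw_byWitness[where f' = "\<lambda>S x. if x \<in> S then 1 else 0"])
    show "\<forall>f\<in>Fn A. (\<lambda>x. if x \<in> {x. f x = 1} then 1 else 0) = f"
    proof
      fix f :: "'a \<Rightarrow> bit" show "(\<lambda>x. if x \<in> {x. f x = 1} then 1 else 0) = f"
      proof
        fix x show "(if x \<in> {x. f x = 1} then 1 else 0) = f x" by (cases "f x") auto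
      qed
    qed
    show "\<forall>S\<in>Pow A. {x. (if x \<in> S then 1 else 0) = (1::bit)} = S" by auto
    show "(\<lambda>f. {x. f x = 1}) ` Fn A \<subseteq> Pow A" unfolding Fn_def by auto
    show "(\<lambda>S x. if x \<in> S then 1 else 0) ` Pow A \<subseteq> Fn A" unfolding Fn_def by auto
  qed
  thus "finite (Fn A)" using assms bij_betw_finite by blast
  show "card (Fn A) = 2 ^ card A" using bij_betw_same_card[OF bij] card_Pow[OF assms] by simp
qed

lemma KK_sub: "KK U k t \<subseteq> Fn (ksub U k)" unfolding KK_def by auto

lemma finite_KK: "finite U \<Longrightarrow> finite (KK U k t)"
  using KK_sub Fn_Pow(1) finite_ksub finite_subset by metis

lemma ksub_ins:
  assumes "finite U" "L \<in> ksub U k" "a \<notin> U"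
  shows "insert a L \<in> ksub (insert a U) (Suc k)"
proof -
  have "finite L" "a \<notin> L" using assms by (auto simp: ksub_def intro: finite_subset)
  thus ?thesis using assms by (auto simp: ksub_def)
qed

lemma ksub_mono: "L \<in> ksub U k \<Longrightarrow> L \<in> ksub (insert a U) k"
  by (auto simp: ksub_def)

lemma ksub_del:
  assumes "finite U" "L \<in> ksub (insert a U) k" "a \<notin> U" "a \<in> L"
  shows "L - {a} \<in> ksub U (k - 1)"
proof -
  have "finite L" using assms by (auto simp: ksub_def intro: finite_subset)
  thus ?thesis using assms by (auto simp: ksub_def card_Diff_singleton)
qed

lemma ksub_notin:
  assumes "L \<in> ksub (insert a U) k" "a \<notin> L"
  shows "L \<in> ksub U k"
  using assms by (auto simp: ksub_def)

definition phi :: "nat set \<Rightarrow> nat \<Rightarrow> nat \<Rightarrow> nat \<Rightarrow> (nat set \<Rightarrow> bit) \<Rightarrow> (nat set \<Rightarrow> bit) \<times> (nat set \<Rightarrow> bit) \<times> (nat set \<Rightarrow> bit)" where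
  "phi U a b t x = (msk (ksub U (t+2)) x,
     msk (ksub U (t+1)) (\<lambda>L. x (insert a L) + up U (t+2) x L),
     msk (ksub U (t+1)) (\<lambda>L. x (insert b L) + up U (t+2) x L))"

definition psiA :: "nat set \<Rightarrow> nat \<Rightarrow> (nat set \<Rightarrow> bit) \<Rightarrow> (nat set \<Rightarrow> bit) \<Rightarrow> nat set \<Rightarrow> bit" where
  "psiA U t f u = msk (ksub U (t+1)) (\<lambda>L. u L + up U (t+2) f L)"

definition psiAB :: "nat set \<Rightarrow> nat \<Rightarrow> (nat set \<Rightarrow> bit) \<Rightarrow> (nat set \<Rightarrow> bit) \<Rightarrow> (nat set \<Rightarrow> bit) \<Rightarrow> nat set \<Rightarrow> bit" where
  "psiAB U t f u w = msk (ksub U t) (\<lambda>L. up U (t+2) f L + up U (t+1) (psiA U t f u) L + up U (t+1) (psiA U t f w) L)"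

definition psi :: "nat set \<Rightarrow> nat \<Rightarrow> nat \<Rightarrow> nat \<Rightarrow> (nat set \<Rightarrow> bit) \<times> (nat set \<Rightarrow> bit) \<times> (nat set \<Rightarrow> bit) \<Rightarrow> nat set \<Rightarrow> bit" where
  "psi U a b t p = (case p of (f, u, w) \<Rightarrow> (\<lambda>L. if a \<in> L then (if b \<in> L then psiAB U t f u w (L - {a} - {b}) else psiA U t f u (L - {a}))
       else (if b \<in> L then psiA U t f w (L - {b}) else f L)))"

context
  fixes U :: "nat set" and a b t :: nat
  assumes fin: "finite U" and ab: "a \<noteq> b" and aU: "a \<notin> U" and bU: "b \<notin> U" and t1: "t \<ge> 1"
begin

lemma split_full: "up (insert a (insert b U)) (t+2) g S = up U (t+2) g S + up U (t+1) (\<lambda>L. g (insert b L)) (S - {b})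
     + up U (t+1) (\<lambda>L. g (insert a L)) (S - {a}) + up U t (\<lambda>L. g (insert a (insert b L))) (S - {a} - {b})"
  using up_split2[OF fin ab aU bU, of "t+2" g S] by simp

lemma fin_ksub_elem: "L \<in> ksub U k \<Longrightarrow> finite L"
  using fin by (auto simp: ksub_def intro: finite_subset)

lemma xa_cond:
  assumes x: "x \<in> KK (insert a (insert b U)) (t+2) t" and S: "S \<in> ksub U (t-1)"
  shows "up U (t+1) (\<lambda>L. x (insert a L)) S + up U t (\<lambda>L. x (insert a (insert b L))) S = 0"
proof -
  have aS: "a \<notin> S" "b \<notin> S" using S aU bU by (auto simp: ksub_def)
  have "insert a S \<in> ksub (insert a (insert b U)) (Suc (t - 1))"
    using S aU bU ab by (intro ksub_ins ksub_mono) (auto simp: fin)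
  hence mem: "insert a S \<in> ksub (insert a (insert b U)) t" using t1 by simp
  have "up (insert a (insert b U)) (t+2) x (insert a S) = 0" using x mem by (auto simp: KK_def)
  moreover have "up U (t+2) x (insert a S) = 0" using aU by (intro up_not_sub) auto
  moreover have "up U (t+1) (\<lambda>L. x (insert b L)) (insert a S - {b}) = 0" using aU ab by (intro up_not_sub) auto
  moreover have "insert a S - {a} = S" "insert a S - {a} - {b} = S" using aS by auto
  ultimately show ?thesis unfolding split_full by simp
qed

lemma xb_cond:
  assumes x: "x \<in> KK (insert a (insert b U)) (t+2) t" and S: "S \<in> ksub U (t-1)"
  shows "up U (t+1) (\<lambda>L. x (insert b L)) S + up U t (\<lambda>L. x (insert a (insert b L))) S = 0"
proof -
  have aS: "a \<notin> S" "b \<notin> S" using S aU bU by (auto simp: ksub_def)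
  have "insert b S \<in> ksub (insert b U) (Suc (t - 1))"
    using S bU by (intro ksub_ins) (auto simp: fin)
  hence "insert b S \<in> ksub (insert a (insert b U)) (Suc (t - 1))" by (rule ksub_mono)
  hence mem: "insert b S \<in> ksub (insert a (insert b U)) t" using t1 by simp
  have "up (insert a (insert b U)) (t+2) x (insert b S) = 0" using x mem by (auto simp: KK_def)
  moreover have "up U (t+2) x (insert b S) = 0" using bU by (intro up_not_sub) auto
  moreover have "up U (t+1) (\<lambda>L. x (insert a L)) (insert b S - {a}) = 0" using bU ab by (intro up_not_sub) auto
  moreover have "insert b S - {b} = S" "insert b S - {a} - {b} = S" using aS by auto
  ultimately show ?thesis unfolding split_full by simp
qed

lemma e0_cond:
  assumes x: "x \<in> KK (insert a (insert b U)) (t+2) t" and S: "S \<in> ksub U t"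
  shows "x (insert a (insert b S)) = up U (t+2) x S + up U (t+1) (\<lambda>L. x (insert b L)) S + up U (t+1) (\<lambda>L. x (insert a L)) S"
proof -
  have aS: "a \<notin> S" "b \<notin> S" using S aU bU by (auto simp: ksub_def)
  have mem: "S \<in> ksub (insert a (insert b U)) t" using S by (intro ksub_mono)
  have "up (insert a (insert b U)) (t+2) x S = 0" using x mem by (auto simp: KK_def)
  moreover have "S - {a} = S" "S - {b} = S" "S - {a} - {b} = S" using aS by auto
  moreover have "up U t (\<lambda>L. x (insert a (insert b L))) S = x (insert a (insert b S))"
    using up_self[OF fin S] .
  ultimately show ?thesis unfolding split_full by (metis bit_solve)
qed


lemma msk_Fn: "msk A g \<in> Fn A" unfolding msk_def Fn_def by auto

lemma cS: "S \<in> ksub U s \<Longrightarrow> card S = s" by (simp add: ksub_def)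

lemma xab_sum:
  assumes x: "x \<in> KK (insert a (insert b U)) (t+2) t" and S: "S \<in> ksub U (t-1)"
  shows "up U t (\<lambda>L. x (insert a (insert b L))) S = up U (t+2) x S"
proof -
  have "up U t (\<lambda>L. x (insert a (insert b L))) S =
     up U t (\<lambda>T. up U (t+2) x T + up U (t+1) (\<lambda>L. x (insert b L)) T + up U (t+1) (\<lambda>L. x (insert a L)) T) S"
    by (rule up_cong2) (rule e0_cond[OF x])
  also have "\<dots> = up U t (up U (t+2) x) S + up U t (up U (t+1) (\<lambda>L. x (insert b L))) S
      + up U t (up U (t+1) (\<lambda>L. x (insert a L))) S"
    by (simp only: up_add)
  also have "up U t (up U (t+2) x) S = of_nat ((t + 2 - (t - 1)) choose (t - (t - 1))) * up U (t+2) x S"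
    using t1 cS[OF S] by (intro up_compose fin) auto
  also have "(t + 2 - (t - 1)) choose (t - (t - 1)) = 3" using t1 by (simp add: numeral_eq_Suc)
  also have "up U t (up U (t+1) (\<lambda>L. x (insert b L))) S = of_nat ((t + 1 - (t - 1)) choose (t - (t - 1))) * up U (t+1) (\<lambda>L. x (insert b L)) S"
    using t1 cS[OF S] by (intro up_compose fin) auto
  also have "up U t (up U (t+1) (\<lambda>L. x (insert a L))) S = of_nat ((t + 1 - (t - 1)) choose (t - (t - 1))) * up U (t+1) (\<lambda>L. x (insert a L)) S"
    using t1 cS[OF S] by (intro up_compose fin) auto
  also have "(t + 1 - (t - 1)) choose (t - (t - 1)) = 2" using t1 by (simp add: numeral_eq_Suc)
  finally show ?thesis by simp
qed

lemma phi_mem: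
  assumes x: "x \<in> KK (insert a (insert b U)) (t+2) t"
  shows "phi U a b t x \<in> Fn (ksub U (t+2)) \<times> KK U (t+1) (t-1) \<times> KK U (t+1) (t-1)"
proof -
  have key: "up U (t+1) (\<lambda>L. x (insert c L) + up U (t+2) x L) S = up U (t+1) (\<lambda>L. x (insert c L)) S + up U (t+2) x S"
    if S: "S \<in> ksub U (t-1)" for c S
  proof -
    have "up U (t+1) (\<lambda>L. x (insert c L) + up U (t+2) x L) S = up U (t+1) (\<lambda>L. x (insert c L)) S + up U (t+1) (up U (t+2) x) S"
      by (rule up_add)
    also have "up U (t+1) (up U (t+2) x) S = of_nat ((t + 2 - (t - 1)) choose (t + 1 - (t - 1))) * up U (t+2) x S"
      using t1 cS[OF S] by (intro up_compose fin) auto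
    also have "(t + 2 - (t - 1)) choose (t + 1 - (t - 1)) = 3" using t1 by (simp add: numeral_eq_Suc)
    finally show ?thesis by simp
  qed
  have A: "msk (ksub U (t+1)) (\<lambda>L. x (insert a L) + up U (t+2) x L) \<in> KK U (t+1) (t-1)"
    unfolding KK_def using key xa_cond[OF x] xab_sum[OF x] by (auto simp: msk_Fn)
  have B: "msk (ksub U (t+1)) (\<lambda>L. x (insert b L) + up U (t+2) x L) \<in> KK U (t+1) (t-1)"
    unfolding KK_def using key xb_cond[OF x] xab_sum[OF x] by (auto simp: msk_Fn)
  show ?thesis unfolding phi_def using A B msk_Fn by auto
qed


lemma decomp:
  assumes L: "L \<in> ksub (insert a (insert b U)) (t+2)"
  obtains (both) L' where "L' \<in> ksub U t" "L = insert a (insert b L')"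
    | (onlya) L' where "L' \<in> ksub U (t+1)" "L = insert a L'"
    | (onlyb) L' where "L' \<in> ksub U (t+1)" "L = insert b L'"
    | (neither) "L \<in> ksub U (t+2)"
proof (cases "a \<in> L")
  case True
  have finb: "finite (insert b U)" using fin by simp
  have aU': "a \<notin> insert b U" using aU ab by simp
  have L1: "L - {a} \<in> ksub (insert b U) (t+1)" using ksub_del[OF finb L aU' True] by simp
  show ?thesis
  proof (cases "b \<in> L")
    case True
    hence "b \<in> L - {a}" using ab by simp
    hence "L - {a} - {b} \<in> ksub U t" using ksub_del[OF fin L1 bU] by simp
    moreover have "L = insert a (insert b (L - {a} - {b}))" using \<open>a \<in> L\<close> True by auto
    ultimately show ?thesis using that(1) by blast
  next
    case False
    hence "L - {a} \<in> ksub U (t+1)" using ksub_notin[OF L1] by simp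
    moreover have "L = insert a (L - {a})" using \<open>a \<in> L\<close> by auto
    ultimately show ?thesis using that(2) by blast
  qed
next
  case False
  hence L1: "L \<in> ksub (insert b U) (t+2)" using ksub_notin[OF L] by simp
  show ?thesis
  proof (cases "b \<in> L")
    case True
    hence "L - {b} \<in> ksub U (t+1)" using ksub_del[OF fin L1 bU] by simp
    moreover have "L = insert b (L - {b})" using True by auto
    ultimately show ?thesis using that(3) by blast
  next
    case False
    thus ?thesis using ksub_notin[OF L1] that(4) by blast
  qed
qed

lemma phi_inj: "inj_on (phi U a b t) (KK (insert a (insert b U)) (t+2) t)"
proof (rule inj_onI)
  fix x y assume x: "x \<in> KK (insert a (insert b U)) (t+2) t" and y: "y \<in> KK (insert a (insert b U)) (t+2) t"
    and eq: "phi U a b t x = phi U a b t y"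
  have h1: "x L = y L" if "L \<in> ksub U (t+2)" for L
    using fun_cong[OF arg_cong[OF eq, of fst], of L] that by (simp add: phi_def msk_def)
  have h2: "up U (t+2) x S = up U (t+2) y S" for S by (rule up_cong2) (rule h1)
  have h3: "x (insert a L) = y (insert a L)" if "L \<in> ksub U (t+1)" for L
    using fun_cong[OF arg_cong[OF eq, of "\<lambda>p. fst (snd p)"], of L] that h2[of L]
    by (simp add: phi_def msk_def)
  have h4: "x (insert b L) = y (insert b L)" if "L \<in> ksub U (t+1)" for L
    using fun_cong[OF arg_cong[OF eq, of "\<lambda>p. snd (snd p)"], of L] that h2[of L]
    by (simp add: phi_def msk_def)
  have h5: "x (insert a (insert b L)) = y (insert a (insert b L))" if L: "L \<in> ksub U t" for L
  proof -
    have "up U (t+1) (\<lambda>L. x (insert b L)) L = up U (t+1) (\<lambda>L. y (insert b L)) L" by (rule up_cong2) (rule h4)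
    moreover have "up U (t+1) (\<lambda>L. x (insert a L)) L = up U (t+1) (\<lambda>L. y (insert a L)) L" by (rule up_cong2) (rule h3)
    ultimately show ?thesis using e0_cond[OF x L] e0_cond[OF y L] h2[of L] by simp
  qed
  show "x = y"
  proof
    fix L
    show "x L = y L"
    proof (cases "L \<in> ksub (insert a (insert b U)) (t+2)")
      case False
      thus ?thesis using x y by (auto simp: KK_def Fn_def)
    next
      case True
      thus ?thesis by (cases rule: decomp) (auto simp: h1 h3 h4 h5)
    qed
  qed
qed


lemma P1:
  assumes v: "v \<in> KK U (t+1) (t-1)" and S: "S \<in> ksub U (t-1)"
  shows "up U (t+1) (psiA U t f v) S = up U (t+2) f S"
proof -
  have "up U (t+1) (psiA U t f v) S = up U (t+1) v S + up U (t+1) (up U (t+2) f) S"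
    unfolding psiA_def up_msk by (rule up_add)
  also have "up U (t+1) v S = 0" using v S by (auto simp: KK_def)
  also have "up U (t+1) (up U (t+2) f) S = of_nat ((t + 2 - (t - 1)) choose (t + 1 - (t - 1))) * up U (t+2) f S"
    using t1 cS[OF S] by (intro up_compose fin) auto
  also have "(t + 2 - (t - 1)) choose (t + 1 - (t - 1)) = 3" using t1 by (simp add: numeral_eq_Suc)
  finally show ?thesis by simp
qed

lemma P2:
  assumes u: "u \<in> KK U (t+1) (t-1)" and w: "w \<in> KK U (t+1) (t-1)" and S: "S \<in> ksub U (t-1)"
  shows "up U t (psiAB U t f u w) S = up U (t+2) f S"
proof -
  have "up U t (psiAB U t f u w) S = up U t (up U (t+2) f) S + up U t (up U (t+1) (psiA U t f u)) S
      + up U t (up U (t+1) (psiA U t f w)) S"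
    unfolding psiAB_def up_msk by (simp only: up_add)
  also have "up U t (up U (t+2) f) S = of_nat ((t + 2 - (t - 1)) choose (t - (t - 1))) * up U (t+2) f S"
    using t1 cS[OF S] by (intro up_compose fin) auto
  also have "(t + 2 - (t - 1)) choose (t - (t - 1)) = 3" using t1 by (simp add: numeral_eq_Suc)
  also have "up U t (up U (t+1) (psiA U t f u)) S = of_nat ((t + 1 - (t - 1)) choose (t - (t - 1))) * up U (t+1) (psiA U t f u) S"
    using t1 cS[OF S] by (intro up_compose fin) auto
  also have "up U t (up U (t+1) (psiA U t f w)) S = of_nat ((t + 1 - (t - 1)) choose (t - (t - 1))) * up U (t+1) (psiA U t f w) S"
    using t1 cS[OF S] by (intro up_compose fin) auto
  also have "(t + 1 - (t - 1)) choose (t - (t - 1)) = 2" using t1 by (simp add: numeral_eq_Suc)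
  finally show ?thesis by simp
qed

lemma Q1:
  assumes v: "v \<in> KK U (t+1) (t-1)" and S: "S \<in> ksub U (t-2)" and t2: "t \<ge> 2"
  shows "up U (t+1) (psiA U t f v) S = 0"
proof -
  have "up U (t-1) (up U (t+1) v) S = of_nat ((t + 1 - (t - 2)) choose (t - 1 - (t - 2))) * up U (t+1) v S"
    using t2 cS[OF S] by (intro up_compose fin) auto
  also have "(t + 1 - (t - 2)) choose (t - 1 - (t - 2)) = 3" using t2 by (simp add: numeral_eq_Suc)
  finally have e1: "up U (t-1) (up U (t+1) v) S = up U (t+1) v S" by simp
  have "up U (t-1) (up U (t+1) v) S = up U (t-1) (\<lambda>_. 0) S"
    using v by (intro up_cong2) (auto simp: KK_def)
  hence v0: "up U (t+1) v S = 0" using e1 up_zero by simp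
  have "up U (t+1) (psiA U t f v) S = up U (t+1) v S + up U (t+1) (up U (t+2) f) S"
    unfolding psiA_def up_msk by (rule up_add)
  also have "up U (t+1) (up U (t+2) f) S = of_nat ((t + 2 - (t - 2)) choose (t + 1 - (t - 2))) * up U (t+2) f S"
    using t2 cS[OF S] by (intro up_compose fin) auto
  also have "(t + 2 - (t - 2)) choose (t + 1 - (t - 2)) = 4" using t2 by (simp add: numeral_eq_Suc)
  finally show ?thesis using v0 by simp
qed

lemma Q2:
  assumes u: "u \<in> KK U (t+1) (t-1)" and w: "w \<in> KK U (t+1) (t-1)" and S: "S \<in> ksub U (t-2)" and t2: "t \<ge> 2"
  shows "up U t (psiAB U t f u w) S = 0"
proof -
  have "up U t (psiAB U t f u w) S = up U t (up U (t+2) f) S + up U t (up U (t+1) (psiA U t f u)) S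
      + up U t (up U (t+1) (psiA U t f w)) S"
    unfolding psiAB_def up_msk by (simp only: up_add)
  also have "up U t (up U (t+2) f) S = of_nat ((t + 2 - (t - 2)) choose (t - (t - 2))) * up U (t+2) f S"
    using t2 cS[OF S] by (intro up_compose fin) auto
  also have "(t + 2 - (t - 2)) choose (t - (t - 2)) = 6" using t2 by (simp add: numeral_eq_Suc)
  also have "up U t (up U (t+1) (psiA U t f u)) S = of_nat ((t + 1 - (t - 2)) choose (t - (t - 2))) * up U (t+1) (psiA U t f u) S"
    using t2 cS[OF S] by (intro up_compose fin) auto
  also have "up U t (up U (t+1) (psiA U t f w)) S = of_nat ((t + 1 - (t - 2)) choose (t - (t - 2))) * up U (t+1) (psiA U t f w) S"
    using t2 cS[OF S] by (intro up_compose fin) auto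
  finally show ?thesis using Q1[OF u S t2] Q1[OF w S t2] by simp
qed


lemma psi_eval:
  assumes "L \<subseteq> U"
  shows "psi U a b t (f, u, w) L = f L"
    "psi U a b t (f, u, w) (insert a L) = psiA U t f u L"
    "psi U a b t (f, u, w) (insert b L) = psiA U t f w L"
    "psi U a b t (f, u, w) (insert a (insert b L)) = psiAB U t f u w L"
proof -
  have "a \<notin> L" "b \<notin> L" using assms aU bU by auto
  thus "psi U a b t (f, u, w) L = f L"
    "psi U a b t (f, u, w) (insert a L) = psiA U t f u L"
    "psi U a b t (f, u, w) (insert b L) = psiA U t f w L"
    "psi U a b t (f, u, w) (insert a (insert b L)) = psiAB U t f u w L"
    using ab by (auto simp: psi_def insert_Diff_if)
qed

lemma psi_mem:
  assumes f: "f \<in> Fn (ksub U (t+2))" and u: "u \<in> KK U (t+1) (t-1)" and w: "w \<in> KK U (t+1) (t-1)"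
  shows "psi U a b t (f, u, w) \<in> KK (insert a (insert b U)) (t+2) t"
proof -
  define x where "x = psi U a b t (f, u, w)"
  have finb: "finite (insert b U)" using fin by simp
  have aU': "a \<notin> insert b U" using aU ab by simp
  have supp: "x L = 0" if nL: "L \<notin> ksub (insert a (insert b U)) (t+2)" for L
  proof (rule ccontr)
    assume nz: "x L \<noteq> 0"
    show False
    proof (cases "a \<in> L")
      case aL: True
      show False
      proof (cases "b \<in> L")
        case True
        hence "psiAB U t f u w (L - {a} - {b}) \<noteq> 0" using nz aL by (simp add: x_def psi_def)
        hence "L - {a} - {b} \<in> ksub U t" by (simp add: psiAB_def msk_def split: if_splits)
        hence "insert b (L - {a} - {b}) \<in> ksub (insert b U) (Suc t)" using ksub_ins[OF fin _ bU] by blast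
        hence "insert a (insert b (L - {a} - {b})) \<in> ksub (insert a (insert b U)) (Suc (Suc t))"
          using ksub_ins[OF finb _ aU'] by blast
        moreover have "insert a (insert b (L - {a} - {b})) = L" using aL True by auto
        ultimately show False using nL by simp
      next
        case False
        hence "psiA U t f u (L - {a}) \<noteq> 0" using nz aL by (simp add: x_def psi_def)
        hence "L - {a} \<in> ksub U (t+1)" by (simp add: psiA_def msk_def split: if_splits)
        hence "L - {a} \<in> ksub (insert b U) (t+1)" by (rule ksub_mono)
        hence "insert a (L - {a}) \<in> ksub (insert a (insert b U)) (Suc (t+1))"
          using ksub_ins[OF finb _ aU'] by blast
        moreover have "insert a (L - {a}) = L" using aL by auto
        ultimately show False using nL by simp
      qed
    next
      case naL: False
      show False
      proof (cases "b \<in> L")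
        case True
        hence "psiA U t f w (L - {b}) \<noteq> 0" using nz naL by (simp add: x_def psi_def)
        hence "L - {b} \<in> ksub U (t+1)" by (simp add: psiA_def msk_def split: if_splits)
        hence "insert b (L - {b}) \<in> ksub (insert b U) (Suc (t+1))" using ksub_ins[OF fin _ bU] by blast
        hence "insert b (L - {b}) \<in> ksub (insert a (insert b U)) (Suc (t+1))" by (rule ksub_mono)
        moreover have "insert b (L - {b}) = L" using True by auto
        ultimately show False using nL by simp
      next
        case False
        hence "f L \<noteq> 0" using nz naL by (simp add: x_def psi_def)
        hence "L \<in> ksub U (t+2)" using f by (auto simp: Fn_def)
        hence "L \<in> ksub (insert a (insert b U)) (t+2)" by (intro ksub_mono)
        thus False using nL by simp
      qed
    qed
  qed
  have c0: "up U k x S = up U k f S" for k S by (rule up_cong) (simp add: x_def psi_eval)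
  have ca: "up U k (\<lambda>L. x (insert a L)) S = up U k (psiA U t f u) S" for k S by (rule up_cong) (simp add: x_def psi_eval)
  have cb: "up U k (\<lambda>L. x (insert b L)) S = up U k (psiA U t f w) S" for k S by (rule up_cong) (simp add: x_def psi_eval)
  have cab: "up U k (\<lambda>L. x (insert a (insert b L))) S = up U k (psiAB U t f u w) S" for k S by (rule up_cong) (simp add: x_def psi_eval)
  have ker: "up (insert a (insert b U)) (t+2) x S = 0" if S: "S \<in> ksub (insert a (insert b U)) t" for S
  proof -
    have E: "up (insert a (insert b U)) (t+2) x S = up U (t+2) f S + up U (t+1) (psiA U t f w) (S - {b})
       + up U (t+1) (psiA U t f u) (S - {a}) + up U t (psiAB U t f u w) (S - {a} - {b})"
      unfolding split_full c0 ca cb cab ..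
    show ?thesis
    proof (cases "a \<in> S")
      case aS: True
      have S1: "S - {a} \<in> ksub (insert b U) (t - 1)" using ksub_del[OF finb S aU' aS] .
      show ?thesis
      proof (cases "b \<in> S")
        case bS: True
        have S2: "S - {a} - {b} \<in> ksub U (t - 1 - 1)" using ksub_del[OF fin S1 bU] bS ab by simp
        have fS: "finite S" using S finb by (auto simp: ksub_def intro: finite_subset)
        have "card {a, b} \<le> card S" using aS bS fS by (intro card_mono) auto
        hence t2: "t \<ge> 2" using ab S by (simp add: ksub_def)
        have "t - 1 - 1 = t - 2" by simp
        hence S2': "S - {a} - {b} \<in> ksub U (t - 2)" using S2 by metis
        have "up U (t+2) f S = 0" using aS aU by (intro up_not_sub) auto
        moreover have "up U (t+1) (psiA U t f w) (S - {b}) = 0" using aS aU ab by (intro up_not_sub) auto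
        moreover have "up U (t+1) (psiA U t f u) (S - {a}) = 0" using bS bU ab by (intro up_not_sub) auto
        ultimately show ?thesis using E Q2[OF u w S2' t2] by simp
      next
        case False
        have S': "S - {a} \<in> ksub U (t - 1)" using ksub_notin[OF S1] False by simp
        have "up U (t+2) f S = 0" using aS aU by (intro up_not_sub) auto
        moreover have "S - {b} = S" "S - {a} - {b} = S - {a}" using False by auto
        moreover have "up U (t+1) (psiA U t f w) S = 0" using aS aU by (intro up_not_sub) auto
        ultimately show ?thesis using E P1[OF u S'] P2[OF u w S'] by simp
      qed
    next
      case naS: False
      have S1: "S \<in> ksub (insert b U) t" using ksub_notin[OF S naS] .
      show ?thesis
      proof (cases "b \<in> S")
        case bS: True
        have S': "S - {b} \<in> ksub U (t - 1)" using ksub_del[OF fin S1 bU bS] .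
        have "up U (t+2) f S = 0" using bS bU by (intro up_not_sub) auto
        moreover have "S - {a} = S" "S - {a} - {b} = S - {b}" using naS by auto
        moreover have "up U (t+1) (psiA U t f u) S = 0" using bS bU by (intro up_not_sub) auto
        ultimately show ?thesis using E P1[OF w S'] P2[OF u w S'] by simp
      next
        case False
        have S': "S \<in> ksub U t" using ksub_notin[OF S1] False by simp
        have "S - {a} = S" "S - {b} = S" "S - {a} - {b} = S" using naS False by auto
        moreover have "up U t (psiAB U t f u w) S = psiAB U t f u w S" by (rule up_self[OF fin S'])
        moreover have "psiAB U t f u w S = up U (t+2) f S + up U (t+1) (psiA U t f u) S + up U (t+1) (psiA U t f w) S"
          using S' by (simp add: psiAB_def msk_def)
        ultimately show ?thesis using E bit_cases3 by simp
      qed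
    qed
  qed
  show ?thesis unfolding x_def[symmetric] KK_def Fn_def using supp ker by auto
qed

lemma psi_inj: "inj_on (psi U a b t) (Fn (ksub U (t+2)) \<times> KK U (t+1) (t-1) \<times> KK U (t+1) (t-1))"
proof (rule inj_onI)
  fix p p' assume pP: "p \<in> Fn (ksub U (t+2)) \<times> KK U (t+1) (t-1) \<times> KK U (t+1) (t-1)"
    and pP': "p' \<in> Fn (ksub U (t+2)) \<times> KK U (t+1) (t-1) \<times> KK U (t+1) (t-1)"
    and eq0: "psi U a b t p = psi U a b t p'"
  obtain f u w where pe: "p = (f, u, w)" by (cases p) auto
  obtain f' u' w' where pe': "p' = (f', u', w')" by (cases p') auto
  have f: "f \<in> Fn (ksub U (t+2))" and u: "u \<in> KK U (t+1) (t-1)" and w: "w \<in> KK U (t+1) (t-1)"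
    using pP pe by auto
  have f': "f' \<in> Fn (ksub U (t+2))" and u': "u' \<in> KK U (t+1) (t-1)" and w': "w' \<in> KK U (t+1) (t-1)"
    using pP' pe' by auto
  have eq: "psi U a b t (f, u, w) = psi U a b t (f', u', w')" using eq0 pe pe' by simp
  have ff: "f = f'"
  proof
    fix L show "f L = f' L"
    proof (cases "L \<in> ksub U (t+2)")
      case True
      hence "L \<subseteq> U" by (simp add: ksub_def)
      thus ?thesis using fun_cong[OF eq, of L] by (simp add: psi_eval)
    next
      case False thus ?thesis using f f' by (simp add: Fn_def)
    qed
  qed
  have gen: "v = v'" if v: "v \<in> KK U (t+1) (t-1)" and v': "v' \<in> KK U (t+1) (t-1)"
     and e: "\<And>L. L \<in> ksub U (t+1) \<Longrightarrow> psiA U t f v L = psiA U t f v' L" for v v'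
  proof
    fix L show "v L = v' L"
    proof (cases "L \<in> ksub U (t+1)")
      case True
      thus ?thesis using e[OF True] by (simp add: psiA_def msk_def)
    next
      case False thus ?thesis using v v' by (auto simp: KK_def Fn_def)
    qed
  qed
  have "u = u'"
  proof (rule gen[OF u u'])
    fix L assume L: "L \<in> ksub U (t+1)"
    hence "L \<subseteq> U" by (simp add: ksub_def)
    thus "psiA U t f u L = psiA U t f u' L" using fun_cong[OF eq, of "insert a L"] ff by (simp add: psi_eval)
  qed
  moreover have "w = w'"
  proof (rule gen[OF w w'])
    fix L assume L: "L \<in> ksub U (t+1)"
    hence "L \<subseteq> U" by (simp add: ksub_def)
    thus "psiA U t f w L = psiA U t f w' L" using fun_cong[OF eq, of "insert b L"] ff by (simp add: psi_eval)
  qed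
  ultimately show "p = p'" using ff pe pe' by simp
qed

lemma core_card:
  "card (KK (insert a (insert b U)) (t+2) t) = 2 ^ (card U choose (t+2)) * card (KK U (t+1) (t-1)) * card (KK U (t+1) (t-1))"
proof -
  let ?K = "KK (insert a (insert b U)) (t+2) t"
  let ?P = "Fn (ksub U (t+2)) \<times> KK U (t+1) (t-1) \<times> KK U (t+1) (t-1)"
  have finK: "finite ?K" using fin by (intro finite_KK) simp
  have finP: "finite ?P" using fin Fn_Pow(1)[of "ksub U (t+2)"] finite_KK[OF fin] by simp
  have "card ?K \<le> card ?P"
    by (rule card_inj_on_le[OF phi_inj _ finP], rule image_subsetI, rule phi_mem)
  moreover have "card ?P \<le> card ?K"
  proof (rule card_inj_on_le[OF psi_inj _ finK], rule image_subsetI)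
    fix p assume "p \<in> ?P"
    then obtain f u w where "p = (f, u, w)" "f \<in> Fn (ksub U (t+2))" "u \<in> KK U (t+1) (t-1)" "w \<in> KK U (t+1) (t-1)"
      by auto
    thus "psi U a b t p \<in> ?K" using psi_mem by simp
  qed
  ultimately have "card ?K = card ?P" by simp
  also have "\<dots> = 2 ^ (card U choose (t+2)) * card (KK U (t+1) (t-1)) * card (KK U (t+1) (t-1))"
    using Fn_Pow(2)[of "ksub U (t+2)"] fin by (simp add: card_cartesian_product card_ksub)
  finally show ?thesis .
qed

end

fun bb :: "nat \<Rightarrow> nat" where
  "bb 0 = 0" | "bb (Suc m) = (2 * m choose (m + 2)) + 2 * bb m"

lemma ksub_12: "ksub {1..2::nat} 2 = {{1..2}}"
proof (rule set_eqI)
  fix L :: "nat set"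
  show "L \<in> ksub {1..2} 2 \<longleftrightarrow> L \<in> {{1..2}}"
  proof
    assume "L \<in> ksub {1..2} 2"
    hence "L \<subseteq> {1..2}" "card L = card {1..2::nat}" by (auto simp: ksub_def)
    thus "L \<in> {{1..2}}" using card_subset_eq[of "{1..2::nat}" L] by simp
  qed (simp add: ksub_def)
qed

lemma KK_base: "card (KK {1..2::nat} 2 0) = 1"
proof -
  have "KK {1..2::nat} 2 0 = {\<lambda>_. 0}"
  proof (rule set_eqI, rule iffI)
    fix x assume x: "x \<in> KK {1..2::nat} 2 0"
    have "{} \<in> ksub {1..2::nat} 0" by (simp add: ksub_def)
    hence "up {1..2} 2 x {} = 0" using x by (auto simp: KK_def)
    hence "x {1..2} = 0" unfolding up_def ksub_12 by simp
    moreover have "x L = 0" if "L \<noteq> {1..2}" for L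
    proof -
      have "L \<notin> ksub {1..2::nat} 2" using that unfolding ksub_12 by simp
      thus ?thesis using x unfolding KK_def Fn_def by blast
    qed
    ultimately have "x = (\<lambda>_. 0)" by (metis ext)
    thus "x \<in> {\<lambda>_. 0}" by simp
  next
    fix x :: "nat set \<Rightarrow> bit" assume "x \<in> {\<lambda>_. 0}"
    thus "x \<in> KK {1..2} 2 0" by (simp add: KK_def Fn_def up_zero)
  qed
  thus ?thesis by simp
qed

lemma KK_card: "m \<ge> 1 \<Longrightarrow> card (KK {1..2*m} (m+1) (m-1)) = 2 ^ bb m"
proof (induction m rule: nat_induct_at_least)
  case base
  thus ?case using KK_base by (simp add: numeral_eq_Suc)
next
  case (Suc m)
  have U: "{1..2 * Suc m} = insert (2*m+1) (insert (2*m+2) {1..2*m})" by auto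
  have "card (KK {1..2 * Suc m} (Suc m + 1) (Suc m - 1)) = card (KK (insert (2*m+1) (insert (2*m+2) {1..2*m})) (m+2) m)"
    unfolding U by simp
  also have "\<dots> = 2 ^ (card {1..2*m} choose (m+2)) * card (KK {1..2*m} (m+1) (m-1)) * card (KK {1..2*m} (m+1) (m-1))"
    using Suc.hyps by (intro core_card) auto
  also have "\<dots> = 2 ^ bb (Suc m)" using Suc.IH by (simp add: power_add power_mult_distrib mult_2 power_mult)
  finally show ?case .
qed

lemma alpha_Suc: "alpha (Suc m) = 2 * alpha m + (2 * m choose m)"
proof -
  have "alpha (Suc m) = (\<Sum>i<m. 2 ^ (m - i) * (2 * i choose i)) + (2 * m choose m)"
    unfolding alpha_def by simp
  also have "(\<Sum>i<m. 2 ^ (m - i) * (2 * i choose i)) = 2 * alpha m"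
    unfolding alpha_def sum_distrib_left
  proof (rule sum.cong)
    fix i assume "i \<in> {..<m}"
    hence "m - i = Suc (m - 1 - i)" by auto
    thus "2 ^ (m - i) * (2 * i choose i) = 2 * (2 ^ (m - 1 - i) * (2 * i choose i))" by simp
  qed simp
  finally show ?thesis .
qed

lemma binom_step: "(2 * m + 2) choose (m + 2) = (2 * m choose (m + 2)) + 2 * (2 * m choose (m + 1)) + (2 * m choose m)"
proof -
  have "(2 * m + 2) choose (m + 2) = Suc (Suc (2 * m)) choose Suc (Suc m)" by simp
  also have "\<dots> = (Suc (2*m) choose Suc m) + (Suc (2 * m) choose Suc (Suc m))" by (rule binomial_Suc_Suc)
  also have "\<dots> = ((2*m) choose m) + (2*m choose Suc m) + ((2*m choose Suc m) + (2*m choose Suc (Suc m)))"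
    by simp
  finally show ?thesis by simp
qed

lemma bb_alpha: "int (bb m) = int (2 * m choose (m + 1)) - int (alpha m)"
proof (induction m)
  case 0 thus ?case by (simp add: alpha_def)
next
  case (Suc m)
  have "int (bb (Suc m)) = int (2 * m choose (m + 2)) + 2 * (int (2 * m choose (m + 1)) - int (alpha m))"
    using Suc.IH by simp
  also have "\<dots> = int ((2 * m + 2) choose (m + 2)) - int (alpha (Suc m))"
    unfolding binom_step alpha_Suc by simp
  finally show ?case by simp
qed

definition ex :: "nat \<Rightarrow> nat set \<Rightarrow> nat \<Rightarrow>\<^sub>0 nat" where
  "ex k S = Poly_Mapping.single 0 k + (\<Sum>j\<in>S. Poly_Mapping.single j 1)"

lemma mono_ex: "mono k S = Poly_Mapping.single (ex k S) 1"
  by (simp add: mono_def ex_def)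

lemma lookup_ex0: "0 \<notin> S \<Longrightarrow> Poly_Mapping.lookup (ex k S) 0 = k"
  unfolding ex_def lookup_add lookup_sum lookup_single by (auto simp: when_def intro!: sum.neutral) (metis gr0I)

lemma lookup_exj: "finite S \<Longrightarrow> j \<noteq> 0 \<Longrightarrow> Poly_Mapping.lookup (ex k S) j = (if j \<in> S then 1 else 0)"
  unfolding ex_def lookup_add lookup_sum lookup_single by (simp add: when_def)

lemma ex_inj:
  assumes "finite S" "finite S'" "0 \<notin> S" "0 \<notin> S'" "ex k S = ex k' S'"
  shows "k = k'" "S = S'"
proof -
  have E: "Poly_Mapping.lookup (ex k S) j = Poly_Mapping.lookup (ex k' S') j" for j
    using assms(5) by (rule arg_cong)
  show "k = k'" using E[of 0] unfolding lookup_ex0[OF assms(3)] lookup_ex0[OF assms(4)] .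
  show "S = S'"
  proof (rule set_eqI)
    fix j show "j \<in> S \<longleftrightarrow> j \<in> S'"
    proof (cases "j = 0")
      case True thus ?thesis using assms(3,4) by simp
    next
      case False
      have "(if j \<in> S then 1 else 0) = (if j \<in> S' then 1 else (0::nat))"
        using E[of j] unfolding lookup_exj[OF assms(1) False] lookup_exj[OF assms(2) False] .
      thus ?thesis by (cases "j \<in> S"; cases "j \<in> S'") simp_all
    qed
  qed
qed

lemma lookup_mono: "Poly_Mapping.lookup (mono k S) e = (if ex k S = e then 1 else 0)"
  unfolding mono_ex lookup_single by (simp add: when_def)

lemma lookup_pscale: "Poly_Mapping.lookup (pscale c P) e = c * Poly_Mapping.lookup P e"
  by (cases c) (simp_all add: pscale_def)

lemma Lsets_ksub: "Lsets m = ksub {1..2*m} (m+1)"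
  by (simp add: Lsets_def ksub_def)

lemma finite_Pow_filter: "finite L \<Longrightarrow> finite {S. S \<subseteq> L \<and> P S}"
  by (rule finite_subset[of _ "Pow L"]) auto

lemma lookup_pp_sum:
  "Poly_Mapping.lookup (\<Sum>L\<in>Lsets m. pscale (xi L) (pp m L)) e
     = (\<Sum>S\<in>ksub {1..2*m} (m-1). if ex 1 S = e then up {1..2*m} (m+1) xi S else 0)"
proof -
  let ?U = "{1..2*m}"
  have "Poly_Mapping.lookup (\<Sum>L\<in>Lsets m. pscale (xi L) (pp m L)) e = (\<Sum>L\<in>ksub ?U (m+1). xi L * Poly_Mapping.lookup (pp m L) e)"
    by (simp add: lookup_sum lookup_pscale Lsets_ksub)
  also have "\<dots> = (\<Sum>L\<in>ksub ?U (m+1). \<Sum>S\<in>ksub ?U (m-1). if S \<subseteq> L \<and> ex 1 S = e then xi L else 0)"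
  proof (rule sum.cong)
    fix L assume L: "L \<in> ksub ?U (m+1)"
    have "{S. S \<subseteq> L \<and> card S = m - 1} = {S \<in> ksub ?U (m-1). S \<subseteq> L}" using L by (auto simp: ksub_def)
    hence "Poly_Mapping.lookup (pp m L) e = (\<Sum>S\<in>{S \<in> ksub ?U (m-1). S \<subseteq> L}. if ex 1 S = e then 1 else 0)"
      by (simp add: pp_def lookup_sum lookup_mono)
    also have "\<dots> = (\<Sum>S\<in>ksub ?U (m-1). if S \<subseteq> L then (if ex 1 S = e then 1 else 0) else 0)"
      by (rule sum.inter_filter) simp
    finally have E: "Poly_Mapping.lookup (pp m L) e = (\<Sum>S\<in>ksub ?U (m-1). if S \<subseteq> L then (if ex 1 S = e then 1 else 0) else 0)" .
    show "xi L * Poly_Mapping.lookup (pp m L) e = (\<Sum>S\<in>ksub ?U (m-1). if S \<subseteq> L \<and> ex 1 S = e then xi L else 0)"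
      unfolding E sum_distrib_left by (intro sum.cong) auto
  qed simp
  also have "\<dots> = (\<Sum>S\<in>ksub ?U (m-1). \<Sum>L\<in>ksub ?U (m+1). if S \<subseteq> L \<and> ex 1 S = e then xi L else 0)"
    by (rule sum.swap)
  also have "\<dots> = (\<Sum>S\<in>ksub ?U (m-1). if ex 1 S = e then up ?U (m+1) xi S else 0)"
    unfolding up_def by (intro sum.cong) auto
  finally show ?thesis .
qed

lemma ksub_ex_facts: "S \<in> ksub {1..2*m} k \<Longrightarrow> finite S \<and> 0 \<notin> S"
  by (auto simp: ksub_def intro: finite_subset)

lemma Xspace_KK: "Xspace m = KK {1..2*m} (m+1) (m-1)"
proof (rule set_eqI)
  fix xi
  let ?U = "{1..2*m}"
  let ?P = "\<Sum>L\<in>Lsets m. pscale (xi L) (pp m L)"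
  have "?P = 0 \<longleftrightarrow> (\<forall>S\<in>ksub ?U (m-1). up ?U (m+1) xi S = 0)"
  proof
    assume P0: "?P = 0"
    show "\<forall>S\<in>ksub ?U (m-1). up ?U (m+1) xi S = 0"
    proof
      fix S0 assume S0: "S0 \<in> ksub ?U (m-1)"
      have "0 = Poly_Mapping.lookup ?P (ex 1 S0)" using P0 by simp
      also have "\<dots> = (\<Sum>S\<in>ksub ?U (m-1). if S = S0 then up ?U (m+1) xi S else 0)"
        unfolding lookup_pp_sum
      proof (rule sum.cong)
        fix S assume "S \<in> ksub ?U (m-1)"
        hence "ex 1 S = ex 1 S0 \<longleftrightarrow> S = S0" using ex_inj(2) ksub_ex_facts[OF S0] ksub_ex_facts by metis
        thus "(if ex 1 S = ex 1 S0 then up ?U (m+1) xi S else 0) = (if S = S0 then up ?U (m+1) xi S else 0)" by simp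
      qed simp
      also have "\<dots> = up ?U (m+1) xi S0" using S0 by (simp add: sum.delta')
      finally show "up ?U (m+1) xi S0 = 0" by simp
    qed
  next
    assume H: "\<forall>S\<in>ksub ?U (m-1). up ?U (m+1) xi S = 0"
    show "?P = 0"
    proof (rule poly_mapping_eqI)
      fix e show "Poly_Mapping.lookup ?P e = Poly_Mapping.lookup 0 e"
        unfolding lookup_pp_sum lookup_zero using H by (intro sum.neutral) auto
    qed
  qed
  moreover have "(\<forall>L. L \<notin> Lsets m \<longrightarrow> xi L = 0) \<longleftrightarrow> xi \<in> Fn (ksub ?U (m+1))"
    by (simp add: Fn_def Lsets_ksub)
  ultimately show "xi \<in> Xspace m \<longleftrightarrow> xi \<in> KK ?U (m+1) (m-1)"
    unfolding Xspace_def KK_def by blast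
qed

lemma lookup_Fxi:
  assumes S0: "S0 \<subseteq> {1..2*m}" "card S0 \<le> m - 2"
  shows "Poly_Mapping.lookup (Fxi m xi) (ex (m - card S0) S0) = up {1..2*m} (m+1) xi S0"
proof -
  let ?U = "{1..2*m}"
  have fS0: "finite S0" "0 \<notin> S0" using S0 finite_subset by auto
  have "Poly_Mapping.lookup (Fxi m xi) (ex (m - card S0) S0) = (\<Sum>L\<in>ksub ?U (m+1). xi L * Poly_Mapping.lookup (ff m L) (ex (m - card S0) S0))"
    by (simp add: Fxi_def lookup_sum lookup_pscale Lsets_ksub)
  also have "\<dots> = (\<Sum>L\<in>ksub ?U (m+1). if S0 \<subseteq> L then xi L else 0)"
  proof (rule sum.cong)
    fix L assume L: "L \<in> ksub ?U (m+1)"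
    have fL: "finite L" "0 \<notin> L" "card L = m + 1" using L finite_subset by (auto simp: ksub_def)
    have "Poly_Mapping.lookup (ff m L) (ex (m - card S0) S0) =
        (\<Sum>S\<in>{S. S \<subseteq> L \<and> card S \<le> m - 2}. if S = S0 then 1 else 0)"
      unfolding ff_def lookup_sum lookup_mono
    proof (rule sum.cong)
      fix S assume S: "S \<in> {S. S \<subseteq> L \<and> card S \<le> m - 2}"
      have fS: "finite S" "0 \<notin> S" using S fL finite_subset by auto
      have "ex (card L - card S - 1) S = ex (m - card S0) S0 \<longleftrightarrow> S = S0"
        using ex_inj(2)[OF fS(1) fS0(1) fS(2) fS0(2)] fL by auto
      thus "(if ex (card L - card S - 1) S = ex (m - card S0) S0 then 1 else 0) = (if S = S0 then 1 else (0::bit))"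
        by simp
    qed simp
    also have "\<dots> = (if S0 \<subseteq> L then 1 else 0)"
      using S0 by (simp add: sum.delta' finite_Pow_filter[OF fL(1)])
    finally show "xi L * Poly_Mapping.lookup (ff m L) (ex (m - card S0) S0) = (if S0 \<subseteq> L then xi L else 0)"
      by simp
  qed simp
  finally show ?thesis unfolding up_def .
qed

lemma fun_sum_apply: "(\<Sum>i\<in>I. f i) x = (\<Sum>i\<in>I. f i x)"
  by (induction I rule: infinite_finite_induct) auto

lemma vscale_0[simp]: "vscale 0 x = 0" by (simp add: vscale_def fun_eq_iff)
lemma vscale_1[simp]: "vscale 1 x = x" by (simp add: vscale_def)
lemma vscale_add: "vscale (c + d) x = vscale c x + vscale d x"
  by (simp add: vscale_def fun_eq_iff distrib_right)
lemma fun_add_self: "(x :: 'a \<Rightarrow> bit) + x = 0" by (simp add: fun_eq_iff)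

lemma fun_eq_add0:
  assumes "(x :: 'a \<Rightarrow> bit) + y = 0" shows "x = y"
proof
  fix a
  have "x a + y a = (x + y) a" by simp
  also have "\<dots> = 0" using assms by simp
  finally have "x a + y a = y a + y a" by simp
  thus "x a = y a" by (rule bit_cancel)
qed

definition closedX :: "(nat set \<Rightarrow> bit) set \<Rightarrow> bool" where
  "closedX X \<longleftrightarrow> 0 \<in> X \<and> (\<forall>x\<in>X. \<forall>y\<in>X. x + y \<in> X)"

lemma sumvs_in:
  assumes cX: "closedX X" and BX: "B \<subseteq> X"
  shows "(\<Sum>b\<in>B. vscale (c b) b) \<in> X"
proof -
  have c0: "0 \<in> X" and cadd: "\<And>x y. x \<in> X \<Longrightarrow> y \<in> X \<Longrightarrow> x + y \<in> X"
    using cX unfolding closedX_def by blast+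
  show ?thesis using BX
  proof (induction B rule: infinite_finite_induct)
    case (infinite A)
    show ?case unfolding sum.infinite[OF infinite.hyps] by (rule c0)
  next
    case empty
    show ?case unfolding sum.empty by (rule c0)
  next
    case (insert b B)
    have bX: "b \<in> X" using insert.prems by blast
    have v: "vscale (c b) b \<in> X"
    proof (cases "c b")
      case zero thus ?thesis using c0 by simp
    next
      case one thus ?thesis using bX by simp
    qed
    have r: "(\<Sum>x\<in>B. vscale (c x) x) \<in> X" using insert.IH insert.prems by blast
    show ?case unfolding sum.insert[OF insert.hyps] by (rule cadd[OF v r])
  qed
qed

lemma basis_card:
  assumes fX: "finite X" and cX: "closedX X" and B: "z2_basis vscale X B"
  shows "card X = 2 ^ card B"
proof -
  have BX: "B \<subseteq> X" and ind: "z2_indep_family vscale id B" and sp: "z2_span vscale B = X"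
    using B by (auto simp: z2_basis_def)
  have fB: "finite B" using ind by (simp add: z2_indep_family_def)
  define \<sigma> where "\<sigma> c = (\<Sum>b\<in>B. vscale (c b) b)" for c :: "(nat set \<Rightarrow> bit) \<Rightarrow> bit"
  have inj: "inj_on \<sigma> (Fn B)"
  proof (rule inj_onI)
    fix c c' assume c: "c \<in> Fn B" and c': "c' \<in> Fn B" and eq: "\<sigma> c = \<sigma> c'"
    have "(\<Sum>b\<in>B. vscale (c b + c' b) (id b)) = \<sigma> c + \<sigma> c'"
      unfolding \<sigma>_def by (simp add: vscale_add sum.distrib)
    also have "\<dots> = 0" using eq by (simp add: fun_add_self)
    finally have F: "(\<Sum>b\<in>B. vscale (c b + c' b) (id b)) = 0" .
    have H: "\<And>d. (\<Sum>i\<in>B. vscale (d i) (id i)) = 0 \<Longrightarrow> \<forall>i\<in>B. d i = 0"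
      using ind unfolding z2_indep_family_def by blast
    have "\<forall>b\<in>B. c b + c' b = 0" using H[of "\<lambda>b. c b + c' b", OF F] .
    hence "\<forall>b\<in>B. c b = c' b" by (metis bit_add_self bit_cancel)
    thus "c = c'" using c c' by (auto simp: Fn_def fun_eq_iff)
  qed
  have img: "\<sigma> ` Fn B = X"
  proof
    show "\<sigma> ` Fn B \<subseteq> X" unfolding \<sigma>_def using sumvs_in[OF cX BX] by blast
  next
    show "X \<subseteq> \<sigma> ` Fn B"
    proof
      fix x assume "x \<in> X"
      then obtain c where x: "x = (\<Sum>b\<in>B. vscale (c b) b)" using sp by (auto simp: z2_span_def)
      define c' where "c' b = (if b \<in> B then c b else 0)" for b
      have "c' \<in> Fn B" by (simp add: c'_def Fn_def)
      moreover have "\<sigma> c' = x" unfolding x \<sigma>_def c'_def by (rule sum.cong) auto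
      ultimately show "x \<in> \<sigma> ` Fn B" by blast
    qed
  qed
  have "card X = card (Fn B)" using inj img card_image by fastforce
  also have "\<dots> = 2 ^ card B" using Fn_Pow(2)[OF fB] .
  finally show ?thesis .
qed

lemma in_span_self:
  assumes "b \<in> B" "finite B"
  shows "b \<in> z2_span vscale B"
proof -
  have "(\<Sum>b'\<in>B. vscale (if b' = b then 1 else 0) b') = (\<Sum>b'\<in>B. if b' = b then b' else 0)"
    by (rule sum.cong) auto
  also have "\<dots> = b" using assms by (simp add: sum.delta')
  finally have "\<exists>c. b = (\<Sum>b'\<in>B. vscale (c b') b')" by metis
  thus ?thesis by (simp add: z2_span_def)
qed

lemma basis_exists:
  assumes fX: "finite X" and cX: "closedX X"
  shows "\<exists>B. z2_basis vscale X B"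
proof -
  let ?P = "{B. B \<subseteq> X \<and> z2_indep_family vscale id B}"
  have finP: "finite ?P" by (rule finite_subset[of _ "Pow X"]) (use fX in auto)
  have "{} \<in> ?P" by (simp add: z2_indep_family_def)
  hence ne: "card ` ?P \<noteq> {}" by blast
  obtain B where BP: "B \<in> ?P" and maxB: "card B = Max (card ` ?P)"
    using Max_in[OF finite_imageI[OF finP] ne] by auto
  have BX: "B \<subseteq> X" and ind: "z2_indep_family vscale id B" using BP by auto
  have fB: "finite B" using ind by (simp add: z2_indep_family_def)
  have "z2_span vscale B = X"
  proof
    show "z2_span vscale B \<subseteq> X" unfolding z2_span_def using sumvs_in[OF cX BX] by blast
  next
    show "X \<subseteq> z2_span vscale B"
    proof
      fix x assume xX: "x \<in> X"
      show "x \<in> z2_span vscale B"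
      proof (rule ccontr)
        assume nx: "x \<notin> z2_span vscale B"
        hence xB: "x \<notin> B" using in_span_self fB by blast
        have "z2_indep_family vscale id (insert x B)"
          unfolding z2_indep_family_def
        proof (intro conjI allI impI ballI)
          show "finite (insert x B)" using fB by simp
          fix c assume S: "(\<Sum>i\<in>insert x B. vscale (c i) (id i)) = 0"
          hence S': "vscale (c x) x + (\<Sum>i\<in>B. vscale (c i) i) = 0" using fB xB by simp
          have cx: "c x = 0"
          proof (rule ccontr)
            assume "c x \<noteq> 0"
            hence "c x = 1" by simp
            hence "x + (\<Sum>i\<in>B. vscale (c i) i) = 0" using S' by simp
            hence "x = (\<Sum>i\<in>B. vscale (c i) i)" by (rule fun_eq_add0)
            thus False using nx unfolding z2_span_def by blast
          qed
          hence "(\<Sum>i\<in>B. vscale (c i) (id i)) = 0" using S' by simp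
          moreover have H: "\<And>d. (\<Sum>i\<in>B. vscale (d i) (id i)) = 0 \<Longrightarrow> \<forall>i\<in>B. d i = 0"
            using ind unfolding z2_indep_family_def by blast
          ultimately have "\<forall>i\<in>B. c i = 0" by blast
          fix i assume "i \<in> insert x B"
          thus "c i = 0" using cx \<open>\<forall>i\<in>B. c i = 0\<close> by auto
        qed
        hence "insert x B \<in> ?P" using xX BX by auto
        hence "card (insert x B) \<le> Max (card ` ?P)" using finP by (intro Max_ge) auto
        moreover have "card (insert x B) = Suc (card B)" using fB xB by (rule card_insert_disjoint)
        ultimately show False using maxB by linarith
      qed
    qed
  qed
  thus ?thesis using BX ind unfolding z2_basis_def by blast
qed

lemma closed_KK: "closedX (KK U k t)"
  unfolding closedX_def
proof (intro conjI ballI)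
  show "0 \<in> KK U k t" by (auto simp: KK_def Fn_def up_zero zero_fun_def)
  fix x y assume x: "x \<in> KK U k t" and y: "y \<in> KK U k t"
  have e: "x + y = (\<lambda>L. x L + y L)" by (simp add: fun_eq_iff)
  show "x + y \<in> KK U k t" using x y unfolding e KK_def Fn_def by (auto simp: up_add)
qed

lemma mobius:
  assumes fin: "finite U" and x: "x \<in> Fn (ksub U k)" and L0: "L0 \<in> ksub U k"
  shows "x L0 = (\<Sum>T\<in>Pow (U - L0). up U k x T)"
proof -
  have "(\<Sum>T\<in>Pow (U - L0). up U k x T) = (\<Sum>T\<in>Pow (U - L0). \<Sum>L\<in>ksub U k. if T \<subseteq> L then x L else 0)"
    unfolding up_def ..
  also have "\<dots> = (\<Sum>L\<in>ksub U k. \<Sum>T\<in>Pow (U - L0). if T \<subseteq> L then x L else 0)"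
    by (rule sum.swap)
  also have "\<dots> = (\<Sum>L\<in>ksub U k. if L = L0 then x L else 0)"
  proof (rule sum.cong)
    fix L assume L: "L \<in> ksub U k"
    have fL0: "finite L0" using L0 fin by (auto simp: ksub_def intro: finite_subset)
    have fI: "finite ((U - L0) \<inter> L)" using fin by simp
    have "(\<Sum>T\<in>Pow (U - L0). if T \<subseteq> L then x L else 0) = (\<Sum>T\<in>{T\<in>Pow (U - L0). T \<subseteq> L}. x L)"
      by (rule sum.inter_filter[symmetric]) (simp add: fin)
    also have "{T\<in>Pow (U - L0). T \<subseteq> L} = Pow ((U - L0) \<inter> L)" by auto
    also have "(\<Sum>T\<in>Pow ((U - L0) \<inter> L). x L) = of_nat (card (Pow ((U - L0) \<inter> L))) * x L"
      by (rule sum_constant)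
    also have "card (Pow ((U - L0) \<inter> L)) = 2 ^ card ((U - L0) \<inter> L)"
      using fI by (rule card_Pow)
    also have "of_nat (2 ^ card ((U - L0) \<inter> L)) * x L = (if L = L0 then x L else 0)"
    proof (cases "L = L0")
      case True
      hence "(U - L0) \<inter> L = {}" by auto
      thus ?thesis using True by simp
    next
      case False
      have "(U - L0) \<inter> L \<noteq> {}"
      proof
        assume "(U - L0) \<inter> L = {}"
        hence "L \<subseteq> L0" using L by (auto simp: ksub_def)
        moreover have "card L = card L0" using L L0 by (simp add: ksub_def)
        ultimately have "L = L0" using fL0 card_subset_eq by blast
        thus False using False by simp
      qed
      hence "card ((U - L0) \<inter> L) \<noteq> 0" using fin by simp
      thus ?thesis using False by (simp add: of_nat_power)
    qed
    finally show "(\<Sum>T\<in>Pow (U - L0). if T \<subseteq> L then x L else 0) = (if L = L0 then x L else 0)" .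
  qed simp
  also have "\<dots> = x L0" using L0 fin by (simp add: sum.delta')
  finally show ?thesis by simp
qed

lemma up_lin:
  "up U k (\<Sum>\<xi>\<in>\<Omega>. vscale (c \<xi>) \<xi>) S = (\<Sum>\<xi>\<in>\<Omega>. c \<xi> * up U k \<xi> S)"
proof -
  have "up U k (\<Sum>\<xi>\<in>\<Omega>. vscale (c \<xi>) \<xi>) S = (\<Sum>L\<in>ksub U k. \<Sum>\<xi>\<in>\<Omega>. if S \<subseteq> L then c \<xi> * \<xi> L else 0)"
    unfolding up_def by (rule sum.cong) (auto simp: fun_sum_apply vscale_def)
  also have "\<dots> = (\<Sum>\<xi>\<in>\<Omega>. \<Sum>L\<in>ksub U k. if S \<subseteq> L then c \<xi> * \<xi> L else 0)"
    by (rule sum.swap)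
  also have "\<dots> = (\<Sum>\<xi>\<in>\<Omega>. c \<xi> * up U k \<xi> S)"
    unfolding up_def sum_distrib_left by (intro sum.cong refl) auto
  finally show ?thesis .
qed

theorem lemma7:
  fixes m n :: nat
  assumes "n = 2 * m + 1" and "n \<ge> 5"
  shows "(\<exists>B. z2_basis vscale (Xspace m) B)
       \<and> (\<forall>B. z2_basis vscale (Xspace m) B \<longrightarrow>
              int (card B) = int ((n - 1) choose (m + 1)) - int (alpha m))
       \<and> (\<forall>\<Omega>. z2_basis vscale (Xspace m) \<Omega> \<longrightarrow> z2_indep_family pscale (Fxi m) \<Omega>)"
proof (intro conjI allI impI)
  have m2: "m \<ge> 2" using assms by simp
  let ?U = "{1..2*m}"
  have XK: "Xspace m = KK ?U (m+1) (m-1)" by (rule Xspace_KK)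
  have fX: "finite (Xspace m)" unfolding XK by (rule finite_KK) simp
  have cX: "closedX (Xspace m)" unfolding XK by (rule closed_KK)
  have cardX: "card (Xspace m) = 2 ^ bb m" unfolding XK using m2 by (intro KK_card) simp
  show "\<exists>B. z2_basis vscale (Xspace m) B" using basis_exists[OF fX cX] .
  fix B assume B: "z2_basis vscale (Xspace m) B"
  have "(2::nat) ^ card B = 2 ^ bb m" using basis_card[OF fX cX B] cardX by simp
  hence "card B = bb m" by simp
  moreover have "n - 1 = 2 * m" using assms by simp
  ultimately show "int (card B) = int ((n - 1) choose (m + 1)) - int (alpha m)" using bb_alpha by simp
next
  fix \<Omega> assume \<Omega>: "z2_basis vscale (Xspace m) \<Omega>"
  have m2: "m \<ge> 2" using assms by simp
  let ?U = "{1..2*m}"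
  have XK: "Xspace m = KK ?U (m+1) (m-1)" by (rule Xspace_KK)
  have cX: "closedX (Xspace m)" unfolding XK by (rule closed_KK)
  have \<Omega>X: "\<Omega> \<subseteq> Xspace m" and ind: "z2_indep_family vscale id \<Omega>" using \<Omega> by (auto simp: z2_basis_def)
  have f\<Omega>: "finite \<Omega>" using ind by (simp add: z2_indep_family_def)
  have H: "\<And>d. (\<Sum>i\<in>\<Omega>. vscale (d i) (id i)) = 0 \<Longrightarrow> \<forall>i\<in>\<Omega>. d i = 0"
    using ind unfolding z2_indep_family_def by blast
  show "z2_indep_family pscale (Fxi m) \<Omega>"
    unfolding z2_indep_family_def
  proof (intro conjI allI impI)
    show "finite \<Omega>" by (rule f\<Omega>)
    fix c assume C: "(\<Sum>\<xi>\<in>\<Omega>. pscale (c \<xi>) (Fxi m \<xi>)) = 0"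
    define \<zeta> where "\<zeta> = (\<Sum>\<xi>\<in>\<Omega>. vscale (c \<xi>) \<xi>)"
    have \<zeta>X: "\<zeta> \<in> KK ?U (m+1) (m-1)" unfolding \<zeta>_def XK[symmetric] by (rule sumvs_in[OF cX \<Omega>X])
    have low: "up ?U (m+1) \<zeta> S = 0" if S: "S \<subseteq> ?U" "card S \<le> m - 2" for S
    proof -
      have "up ?U (m+1) \<zeta> S = (\<Sum>\<xi>\<in>\<Omega>. c \<xi> * up ?U (m+1) \<xi> S)" unfolding \<zeta>_def by (rule up_lin)
      also have "\<dots> = (\<Sum>\<xi>\<in>\<Omega>. c \<xi> * Poly_Mapping.lookup (Fxi m \<xi>) (ex (m - card S) S))"
        using lookup_Fxi[OF S] by simp
      also have "\<dots> = Poly_Mapping.lookup (\<Sum>\<xi>\<in>\<Omega>. pscale (c \<xi>) (Fxi m \<xi>)) (ex (m - card S) S)"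
        by (simp add: lookup_sum lookup_pscale)
      also have "\<dots> = 0" unfolding C by simp
      finally show ?thesis .
    qed
    have top: "up ?U (m+1) \<zeta> S = 0" if "S \<in> ksub ?U (m-1)" for S
      using \<zeta>X that by (auto simp: KK_def)
    have z0: "\<zeta> = 0"
    proof
      fix L0 show "\<zeta> L0 = 0 L0"
      proof (cases "L0 \<in> ksub ?U (m+1)")
        case False thus ?thesis using \<zeta>X by (auto simp: KK_def Fn_def)
      next
        case True
        have "\<zeta> L0 = (\<Sum>T\<in>Pow (?U - L0). up ?U (m+1) \<zeta> T)"
          using \<zeta>X True by (intro mobius) (auto simp: KK_def)
        also have "\<dots> = 0"
        proof (rule sum.neutral, rule ballI)
          fix T assume T: "T \<in> Pow (?U - L0)"
          have LU: "L0 \<subseteq> ?U" "card L0 = m + 1" using True by (auto simp: ksub_def)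
          have "card (?U - L0) = card ?U - card L0" using LU(1) finite_subset[OF LU(1)] by (intro card_Diff_subset) auto
          hence "card (?U - L0) = 2 * m - (m + 1)" using LU(2) by simp
          hence "card T \<le> m - 1" using card_mono[of "?U - L0" T] T by simp
          hence "card T = m - 1 \<or> card T \<le> m - 2" by linarith
          thus "up ?U (m+1) \<zeta> T = 0"
          proof
            assume "card T = m - 1"
            hence "T \<in> ksub ?U (m-1)" using T by (auto simp: ksub_def)
            thus ?thesis by (rule top)
          next
            assume "card T \<le> m - 2"
            thus ?thesis using T low by blast
          qed
        qed
        finally show ?thesis by simp
      qed
    qed
    have "(\<Sum>i\<in>\<Omega>. vscale (c i) (id i)) = 0" using z0 unfolding \<zeta>_def by simp
    thus "\<forall>i\<in>\<Omega>. c i = 0" by (rule H)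
  qed
qed

end
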